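(* Let $C\in\mathbb{R}^{d\times d}$ be symmetric positive-definite, $\mu_0=\mathcal{N}(0,C)$, and $\rho\colon\mathbb{R}^d\to(0,\infty)$ measurable. Assume there exist $\alpha\in(0,1/\sqrt2]$ and $R>0$ such that $B_{\alpha\|x\|}(0)\subseteq G_{\rho(x)}$ for all $x$ with $\|x\|>R$. Let $E$ be the transition kernel of elliptical slice sampling for $(\rho,\mu_0)$. Then there exist $\delta\in[0,1)$ and $L\in[0,\infty)$ such that $\int_{\mathbb{R}^d}\|y\|\,E(x,\mathrm{d}y)\le\delta\|x\|+L$ for all $x\in\mathbb{R}^d$.
   Context: $\|\cdot\|$ is the Euclidean norm, $B_r(y)=\{z:\|z-y\|\le r\}$, and $G_t=\{x\in\mathbb{R}^d:\rho(x)\ge t\}$ for $t\ge0$. Let $p(x,w,\theta)=\cos(\theta)x+\sin(\theta)w$. Elliptical slice sampling performs one transition from $x$ as follows: draw $w\sim\mu_0$; draw $t\sim\mathcal{U}[0,\rho(x)]$; draw $\theta\sim\mathcal{U}[0,2\pi]$ and set $\theta_{\min}=\theta-2\pi$, $\theta_{\max}=\theta$; while $p(x,w,\theta)\notin G_t$: if $\theta<0$ set $\theta_{\min}=\theta$, else set $\theta_{\max}=\theta$, and draw a new $\theta\sim\mathcal{U}[\theta_{\min},\theta_{\max}]$; output $y=p(x,w,\theta)$. All draws are independent; $E(x,A)$ is the probability that the output lies in $A$. *)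

theory Defs
  imports "HOL-Probability.Probability"
begin

text \<open>Superlevel set G_t = {x. rho x >= t}.\<close>
definition level_set :: "(real^'n \<Rightarrow> real) \<Rightarrow> real \<Rightarrow> (real^'n) set" where
  "level_set \<rho> t = {x. \<rho> x \<ge> t}"

text \<open>The ellipse p(x,w,theta) = cos theta x + sin theta w.\<close>
definition ell :: "real^'n \<Rightarrow> real^'n \<Rightarrow> real \<Rightarrow> real^'n" where
  "ell x w \<theta> = cos \<theta> *\<^sub>R x + sin \<theta> *\<^sub>R w"

text \<open>Centred Gaussian N(0,C) on R^d (d = CARD('n)), given by its Lebesgue density.\<close>
definition gaussian_vec :: "real^'n^'n \<Rightarrow> (real^'n) measure" where
  "gaussian_vec C = density lborel (\<lambda>x. ennreal
     (exp (- (x \<bullet> (matrix_inv C *v x)) / 2) / sqrt ((2 * pi) ^ CARD('n) * det C)))"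

text \<open>Shrinkage bracket: given uniform U[0,1] numbers u 0, u 1, ..., the n-th proposed angle
  together with the current bracket (theta, theta_min, theta_max).  A draw from U[a,b]
  is realised as a + u (b - a) with u uniform on [0,1].  The bracket is updated
  (shrunk) after each rejected proposal; the values after acceptance are irrelevant.\<close>
fun ess_bracket :: "(nat \<Rightarrow> real) \<Rightarrow> nat \<Rightarrow> real \<times> real \<times> real" where
  "ess_bracket u 0 = (2 * pi * u 0, 2 * pi * u 0 - 2 * pi, 2 * pi * u 0)"
| "ess_bracket u (Suc n) =
     (let (\<theta>, a, b) = ess_bracket u n;
          (a', b') = (if \<theta> < 0 then (\<theta>, b) else (a, \<theta>))
      in (a' + u (Suc n) * (b' - a'), a', b'))"

definition ess_theta :: "(nat \<Rightarrow> real) \<Rightarrow> nat \<Rightarrow> real" where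
  "ess_theta u n = fst (ess_bracket u n)"

text \<open>The loop terminates iff some proposed point lies in G_t; the output is the first such point.\<close>
definition ess_terminates :: "(real^'n \<Rightarrow> real) \<Rightarrow> real^'n \<Rightarrow> real^'n \<Rightarrow> real \<Rightarrow> (nat \<Rightarrow> real) \<Rightarrow> bool" where
  "ess_terminates \<rho> x w t u \<longleftrightarrow> (\<exists>n. ell x w (ess_theta u n) \<in> level_set \<rho> t)"

definition ess_output :: "(real^'n \<Rightarrow> real) \<Rightarrow> real^'n \<Rightarrow> real^'n \<Rightarrow> real \<Rightarrow> (nat \<Rightarrow> real) \<Rightarrow> real^'n" where
  "ess_output \<rho> x w t u = ell x w (ess_theta u (LEAST n. ell x w (ess_theta u n) \<in> level_set \<rho> t))"

text \<open>Underlying probability space of one transition from x: independent w ~ mu_0,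
  t ~ U[0, rho x], and an i.i.d. sequence of U[0,1] variables driving the angle draws.\<close>
definition ess_space :: "real^'n^'n \<Rightarrow> (real^'n \<Rightarrow> real) \<Rightarrow> real^'n
     \<Rightarrow> ((real^'n) \<times> real \<times> (nat \<Rightarrow> real)) measure" where
  "ess_space C \<rho> x = gaussian_vec C \<Otimes>\<^sub>M (uniform_measure lborel {0..\<rho> x} \<Otimes>\<^sub>M
       (\<Pi>\<^sub>M i\<in>UNIV. uniform_measure lborel {0..1::real}))"

text \<open>Transition kernel E(x, A) = probability that the output lies in A
  (a non-terminating run produces no output).\<close>
definition ess_kernel :: "real^'n^'n \<Rightarrow> (real^'n \<Rightarrow> real) \<Rightarrow> real^'n \<Rightarrow> (real^'n) measure" where
  "ess_kernel C \<rho> x = measure_of UNIV (sets borel)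
     (\<lambda>A. emeasure (ess_space C \<rho> x)
        {(w, t, u) \<in> space (ess_space C \<rho> x).
           ess_terminates \<rho> x w t u \<and> ess_output \<rho> x w t u \<in> A})"

end

theory Submission
  imports Defs
begin

typedef 'a wo = "UNIV :: 'a set" by auto

instance wo :: (finite) finite
proof
  have "(UNIV :: 'a wo set) = Abs_wo ` UNIV" by (metis type_definition.univ type_definition_wo)
  then show "finite (UNIV :: 'a wo set)" by (metis finite finite_imageI)
qed

instantiation wo :: (finite) linorder
begin
definition less_eq_wo :: "'a wo \<Rightarrow> 'a wo \<Rightarrow> bool" where
  "less_eq_wo x y \<longleftrightarrow> to_nat (Rep_wo x) \<le> to_nat (Rep_wo y)"
definition less_wo :: "'a wo \<Rightarrow> 'a wo \<Rightarrow> bool" where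
  "less_wo x y \<longleftrightarrow> to_nat (Rep_wo x) < to_nat (Rep_wo y)"
instance
proof
  fix x y z :: "'a wo"
  show "(x < y) = (x \<le> y \<and> \<not> y \<le> x)" unfolding less_eq_wo_def less_wo_def by (rule less_le_not_le)
  show "x \<le> x" by (simp add: less_eq_wo_def)
  show "x \<le> y \<Longrightarrow> y \<le> z \<Longrightarrow> x \<le> z" by (simp add: less_eq_wo_def)
  show "x \<le> y \<Longrightarrow> y \<le> x \<Longrightarrow> x = y"
  proof -
    assume "x \<le> y" "y \<le> x"
    then have "to_nat (Rep_wo x) = to_nat (Rep_wo y)" by (simp add: less_eq_wo_def)
    then have "Rep_wo x = Rep_wo y" by (metis inj_to_nat injD)
    then show "x = y" by (metis Rep_wo_inverse)
  qed
  show "x \<le> y \<or> y \<le> x" unfolding less_eq_wo_def by (rule nat_le_linear)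
qed
end

instance wo :: (finite) wellorder
proof
  fix P :: "'a wo \<Rightarrow> bool" and a
  assume H: "\<And>x. (\<And>y. y < x \<Longrightarrow> P y) \<Longrightarrow> P x"
  show "P a"
  proof (induction a rule: measure_induct_rule[where f="\<lambda>x. to_nat (Rep_wo x)"])
    case (less x)
    show ?case
    proof (rule H)
      fix y assume "y < x"
      then have "to_nat (Rep_wo y) < to_nat (Rep_wo x)" by (simp add: less_wo_def)
      then show "P y" by (rule less)
    qed
  qed
qed

definition vto :: "real^'n \<Rightarrow> real^('n wo)" where "vto x = (\<chi> i. x $ Rep_wo i)"
definition vfrom :: "real^('n wo) \<Rightarrow> real^'n" where "vfrom y = (\<chi> j. y $ Abs_wo j)"

lemma vfrom_vto[simp]: "vfrom (vto x) = x"
  by (simp add: vfrom_def vto_def vec_eq_iff Abs_wo_inverse)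
lemma vto_vfrom[simp]: "vto (vfrom y) = y"
  by (simp add: vfrom_def vto_def vec_eq_iff Rep_wo_inverse)

lemma linear_vfrom: "linear vfrom"
  by (intro linearI) (auto simp: vfrom_def vec_eq_iff)
lemma linear_vto: "linear vto"
  by (intro linearI) (auto simp: vto_def vec_eq_iff)

lemma vfrom_meas[measurable]: "vfrom \<in> borel_measurable borel"
  using linear_vfrom by (intro borel_measurable_continuous_onI linear_continuous_on linear_conv_bounded_linear[THEN iffD1])
lemma vto_meas[measurable]: "vto \<in> borel_measurable borel"
  using linear_vto by (intro borel_measurable_continuous_onI linear_continuous_on linear_conv_bounded_linear[THEN iffD1])

lemma prod_Basis_cart: "(\<Prod>b\<in>(Basis::(real^'k) set). v \<bullet> b) = (\<Prod>i\<in>UNIV. v $ i)"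
proof -
  have B: "(Basis::(real^'k) set) = (\<lambda>i. axis i 1) ` UNIV" by (auto simp: Basis_vec_def)
  have inj: "inj (\<lambda>i::'k. axis i (1::real))" by (auto simp: inj_def axis_eq_axis)
  show ?thesis unfolding B by (subst prod.reindex[OF inj]) (simp add: cart_eq_inner_axis)
qed

lemma prod_wo: "(\<Prod>i\<in>(UNIV::'n wo set). g (Rep_wo i)) = (\<Prod>j\<in>(UNIV::'n set). (g j :: 'a::comm_monoid_mult))"
proof -
  have inj: "inj (Rep_wo :: 'n wo \<Rightarrow> 'n)" by (simp add: Rep_wo_inject inj_def)
  have r: "range (Rep_wo :: 'n wo \<Rightarrow> 'n) = UNIV" by (metis type_definition.Rep_range type_definition_wo)
  show ?thesis using prod.reindex[OF inj, of g] r by simp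
qed

lemma lborel_vfrom: "distr (lborel :: (real^('n wo)) measure) borel vfrom = (lborel :: (real^'n) measure)"
proof (rule lborel_eqI[symmetric])
  fix l u :: "real^'n"
  assume le: "\<And>b. b \<in> Basis \<Longrightarrow> l \<bullet> b \<le> u \<bullet> b"
  have leI: "l $ j \<le> u $ j" for j using le[of "axis j 1"] by (auto simp: Basis_vec_def cart_eq_inner_axis)
  have pre: "vfrom -` box l u = box (vto l) (vto u)"
  proof -
    have "(\<forall>j. l $ j < y $ Abs_wo j \<and> y $ Abs_wo j < u $ j) \<longleftrightarrow> (\<forall>i. l $ Rep_wo i < y $ i \<and> y $ i < u $ Rep_wo i)" for y :: "real^('n wo)"
      by (metis Abs_wo_inverse Rep_wo_inverse UNIV_I)
    then show ?thesis by (auto simp: mem_box_cart vfrom_def vto_def)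
  qed
  have le2: "\<And>b. b \<in> Basis \<Longrightarrow> vto l \<bullet> b \<le> vto u \<bullet> b"
    using leI by (auto simp: Basis_vec_def cart_eq_inner_axis[symmetric] vto_def)
  have "emeasure (distr lborel borel vfrom) (box l u) = emeasure lborel (box (vto l) (vto u))"
    by (subst emeasure_distr) (auto simp: pre)
  also have "\<dots> = (\<Prod>b\<in>Basis. (vto u - vto l) \<bullet> b)" using le2 by simp
  also have "\<dots> = (\<Prod>i\<in>UNIV. (vto u - vto l) $ i)" by (rule arg_cong[OF prod_Basis_cart])
  also have "\<dots> = (\<Prod>i\<in>UNIV. (u - l) $ Rep_wo i)" by (simp add: vto_def)
  also have "\<dots> = (\<Prod>j\<in>UNIV. (u - l) $ j)" by (rule arg_cong[OF prod_wo])
  also have "\<dots> = (\<Prod>b\<in>Basis. (u - l) \<bullet> b)" by (rule arg_cong[OF prod_Basis_cart[symmetric]])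
  finally show "emeasure (distr lborel borel vfrom) (box l u) = (\<Prod>b\<in>Basis. (u - l) \<bullet> b)" .
qed (rule sets_distr)

lemma sum_wo: "(\<Sum>i\<in>(UNIV::'n wo set). g (Rep_wo i)) = (\<Sum>j\<in>(UNIV::'n set). (g j :: 'a::comm_monoid_add))"
proof -
  have inj: "inj (Rep_wo :: 'n wo \<Rightarrow> 'n)" by (simp add: Rep_wo_inject inj_def)
  have r: "range (Rep_wo :: 'n wo \<Rightarrow> 'n) = UNIV" by (metis type_definition.Rep_range type_definition_wo)
  show ?thesis using sum.reindex[OF inj, of g] r by simp
qed

definition mwo :: "real^'n^'n \<Rightarrow> real^('n wo)^('n wo)" where
  "mwo P = (\<chi> i j. P $ Rep_wo i $ Rep_wo j)"

lemma vfrom_mwo: "vfrom (mwo P *v z) = P *v vfrom z"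
proof -
  have "(\<Sum>k\<in>UNIV. P $ j $ Rep_wo k * z $ k) = (\<Sum>l\<in>UNIV. P $ j $ l * z $ Abs_wo l)" for j
    using sum_wo[of "\<lambda>l. P $ j $ l * z $ Abs_wo l"] by (simp add: Rep_wo_inverse)
  then show ?thesis
    by (simp add: vec_eq_iff vfrom_def mwo_def matrix_vector_mult_def Abs_wo_inverse)
qed

lemma det_mwo:
  fixes P :: "real^'n^'n"
  shows "det (mwo P) = det P"
proof -
  let ?S = "{p. p permutes (UNIV :: 'n set)}"
  let ?T = "{q. q permutes (UNIV :: 'n wo set)}"
  have bijA: "bij_betw (Abs_wo :: 'n \<Rightarrow> 'n wo) UNIV UNIV"
    by (metis bij_betw_def inj_on_def Abs_wo_inverse UNIV_I type_definition.univ type_definition_wo)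
  have key: "p permutes UNIV \<Longrightarrow> (\<lambda>x. Abs_wo (p (Rep_wo x))) permutes UNIV \<and>
        sign (\<lambda>x. Abs_wo (p (Rep_wo x))) = sign p" for p :: "'n \<Rightarrow> 'n"
  proof -
    assume p: "p permutes UNIV"
    define p' where "p' = (\<lambda>x. if x \<in> (UNIV :: 'n wo set) then Abs_wo (p (Rep_wo x)) else x)"
    have fin: "finite (UNIV :: 'n set)" by simp
    interpret pb: permutes_bij_finite p UNIV UNIV Abs_wo Rep_wo p'
      unfolding permutes_bij_finite_def permutes_bij_def permutes_bij_finite_axioms_def
      using p bijA fin by (auto simp: Abs_wo_inverse p'_def)
    show ?thesis using pb.permutes_p' pb.sign_p' by (simp add: p'_def)
  qed
  have "det P = (\<Sum>p\<in>?S. of_int (sign p) * (\<Prod>i\<in>UNIV. P $ i $ p i))" by (simp add: det_def)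
  also have "\<dots> = (\<Sum>q\<in>?T. of_int (sign q) * (\<Prod>i\<in>UNIV. mwo P $ i $ q i))"
  proof (rule sum.reindex_bij_witness[where j="\<lambda>p x. Abs_wo (p (Rep_wo x))" and i="\<lambda>q y. Rep_wo (q (Abs_wo y))"])
    fix p assume "p \<in> ?S"
    then have p: "p permutes UNIV" by simp
    show "(\<lambda>y. Rep_wo (Abs_wo (p (Rep_wo (Abs_wo y))))) = p"
      by (simp add: Abs_wo_inverse)
    show "(\<lambda>x. Abs_wo (p (Rep_wo x))) \<in> ?T" using key[OF p] by simp
    have "(\<Prod>i\<in>UNIV. mwo P $ i $ Abs_wo (p (Rep_wo i))) = (\<Prod>i\<in>UNIV. P $ Rep_wo i $ p (Rep_wo i))"
      by (simp add: mwo_def Abs_wo_inverse)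
    also have "\<dots> = (\<Prod>i\<in>UNIV. P $ i $ p i)" by (rule prod_wo)
    finally show "of_int (sign (\<lambda>x. Abs_wo (p (Rep_wo x)))) * (\<Prod>i\<in>UNIV. mwo P $ i $ Abs_wo (p (Rep_wo i)))
        = of_int (sign p) * (\<Prod>i\<in>UNIV. P $ i $ p i)"
      using key[OF p] by simp
  next
    fix q assume "q \<in> ?T"
    then have q: "q permutes UNIV" by simp
    show "(\<lambda>x. Abs_wo (Rep_wo (q (Abs_wo (Rep_wo x))))) = q"
      by (simp add: Rep_wo_inverse)
    have bijq: "bij q" using q by (simp add: permutes_bij)
    have "bij (\<lambda>y. Rep_wo (q (Abs_wo y)))"
    proof -
      have bR: "bij (Rep_wo :: 'n wo \<Rightarrow> 'n)"
        unfolding bij_def inj_def by (metis Rep_wo_inject type_definition.Rep_range type_definition_wo)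
      have "bij (Rep_wo \<circ> q \<circ> Abs_wo)"
        using bijq bijA bR by (intro bij_comp) auto
      then show ?thesis by (simp add: comp_def)
    qed
    then show "(\<lambda>y. Rep_wo (q (Abs_wo y))) \<in> ?S" by (simp add: permutes_univ bij_iff)
  qed
  also have "\<dots> = det (mwo P)" by (simp add: det_def)
  finally show ?thesis ..
qed

lemma minv:
  fixes A :: "real^'n^'n"
  assumes "invertible A"
  shows "A ** matrix_inv A = mat 1" "matrix_inv A ** A = mat 1"
proof -
  have "A ** matrix_inv A = mat 1 \<and> matrix_inv A ** A = mat 1"
    using assms unfolding matrix_inv_def invertible_def by (rule someI_ex)
  then show "A ** matrix_inv A = mat 1" "matrix_inv A ** A = mat 1" by auto
qed

lemma lborel_linear_wo:
  fixes Q :: "real^('m::{finite,wellorder})^('m::{finite,wellorder})"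
  assumes dQ: "det Q \<noteq> 0"
  shows "lborel = density (distr lborel borel ((*v) Q)) (\<lambda>_. ennreal \<bar>det Q\<bar>)"
proof (rule lborel_eqI)
  define Qi where "Qi = matrix_inv Q"
  have inv: "invertible Q" using dQ by (simp add: invertible_det_nz)
  have QQi: "Q ** Qi = mat 1" and QiQ: "Qi ** Q = mat 1" using minv[OF inv] by (auto simp: Qi_def)
  have dd: "\<bar>det Q\<bar> * \<bar>det Qi\<bar> = 1"
    using arg_cong[OF QQi, of det] by (simp add: det_mul abs_mult[symmetric])
  have gm[measurable]: "(*v) Q \<in> borel_measurable borel"
    by (intro borel_measurable_continuous_onI linear_continuous_on matrix_vector_mul_bounded_linear)
  fix l u :: "real^('m::{finite,wellorder})" assume le: "\<And>b. b \<in> Basis \<Longrightarrow> l \<bullet> b \<le> u \<bullet> b"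
  have pre: "(*v) Q -` box l u = (*v) Qi ` box l u"
  proof (intro set_eqI iffI)
    fix x assume "x \<in> (*v) Q -` box l u"
    moreover have "x = Qi *v (Q *v x)" by (simp add: matrix_vector_mul_assoc QiQ)
    ultimately show "x \<in> (*v) Qi ` box l u" by auto
  next
    fix x assume "x \<in> (*v) Qi ` box l u"
    then obtain y where "y \<in> box l u" "x = Qi *v y" by auto
    moreover have "Q *v (Qi *v y) = y" by (simp add: matrix_vector_mul_assoc QQi)
    ultimately show "x \<in> (*v) Q -` box l u" by auto
  qed
  have Xb: "(*v) Qi ` box l u \<in> sets lborel"
    unfolding pre[symmetric] using measurable_sets[OF gm, of "box l u"] by simp
  have Xbd: "bounded ((*v) Qi ` box l u)"
    by (intro bounded_linear_image bounded_box matrix_vector_mul_bounded_linear)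
  have "measure lborel ((*v) Qi ` box l u) = measure lebesgue ((*v) Qi ` box l u)"
    using Xb by simp
  also have "\<dots> = \<bar>det Qi\<bar> * measure lebesgue (box l u)"
    using measure_linear_image[of "(*v) Qi" "box l u"] by (simp add: matrix_vector_mul_linear)
  also have "measure lebesgue (box l u) = (\<Prod>b\<in>Basis. (u - l) \<bullet> b)"
    using le by (simp add: measure_lborel_box_eq)
  finally have mX: "measure lborel ((*v) Qi ` box l u) = \<bar>det Qi\<bar> * (\<Prod>b\<in>Basis. (u - l) \<bullet> b)" .
  have p0: "0 \<le> (\<Prod>b\<in>Basis. (u - l) \<bullet> b)" using le by (intro prod_nonneg) (auto simp: inner_diff_left)
  have "emeasure (density (distr lborel borel ((*v) Q)) (\<lambda>_. ennreal \<bar>det Q\<bar>)) (box l u)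
      = ennreal \<bar>det Q\<bar> * emeasure (distr lborel borel ((*v) Q)) (box l u)"
    by (subst emeasure_density) (auto simp: nn_integral_cmult_indicator)
  also have "emeasure (distr lborel borel ((*v) Q)) (box l u) = emeasure lborel ((*v) Qi ` box l u)"
    by (subst emeasure_distr) (auto simp: pre)
  also have "\<dots> = ennreal (measure lborel ((*v) Qi ` box l u))"
    using emeasure_bounded_finite[OF Xbd] by (intro emeasure_eq_ennreal_measure) auto
  also have "ennreal \<bar>det Q\<bar> * ennreal (measure lborel ((*v) Qi ` box l u)) = ennreal (\<Prod>b\<in>Basis. (u - l) \<bullet> b)"
    unfolding mX using dd p0 by (simp add: ennreal_mult[symmetric] mult.assoc[symmetric])
  finally show "emeasure (density (distr lborel borel ((*v) Q)) (\<lambda>_. ennreal \<bar>det Q\<bar>)) (box l u) = (\<Prod>b\<in>Basis. (u - l) \<bullet> b)"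
    by simp
qed simp

lemma nn_integral_linear_wo:
  fixes Q :: "real^('m::{finite,wellorder})^('m::{finite,wellorder})" and F :: "real^('m::{finite,wellorder}) \<Rightarrow> ennreal"
  assumes dQ: "det Q \<noteq> 0" and F[measurable]: "F \<in> borel_measurable borel"
  shows "(\<integral>\<^sup>+ x. F x \<partial>lborel) = ennreal \<bar>det Q\<bar> * (\<integral>\<^sup>+ y. F (Q *v y) \<partial>lborel)"
proof -
  have gm[measurable]: "(*v) Q \<in> borel_measurable borel"
    by (intro borel_measurable_continuous_onI linear_continuous_on matrix_vector_mul_bounded_linear)
  have "(\<integral>\<^sup>+ x. F x \<partial>lborel) = (\<integral>\<^sup>+ x. F x \<partial>density (distr lborel borel ((*v) Q)) (\<lambda>_. ennreal \<bar>det Q\<bar>))"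
    using lborel_linear_wo[OF dQ] by simp
  also have "\<dots> = (\<integral>\<^sup>+ x. ennreal \<bar>det Q\<bar> * F x \<partial>distr lborel borel ((*v) Q))"
    by (subst nn_integral_density) auto
  also have "\<dots> = (\<integral>\<^sup>+ y. ennreal \<bar>det Q\<bar> * F (Q *v y) \<partial>lborel)"
    by (subst nn_integral_distr) auto
  also have "\<dots> = ennreal \<bar>det Q\<bar> * (\<integral>\<^sup>+ y. F (Q *v y) \<partial>lborel)"
    by (rule nn_integral_cmult) measurable
  finally show ?thesis .
qed

lemma nn_integral_linear:
  fixes P :: "real^'n^'n" and F :: "real^'n \<Rightarrow> ennreal"
  assumes dP: "det P \<noteq> 0" and F[measurable]: "F \<in> borel_measurable borel"
  shows "(\<integral>\<^sup>+ x. F x \<partial>lborel) = ennreal \<bar>det P\<bar> * (\<integral>\<^sup>+ y. F (P *v y) \<partial>lborel)"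
proof -
  have gm[measurable]: "(*v) P \<in> borel_measurable borel"
    by (intro borel_measurable_continuous_onI linear_continuous_on matrix_vector_mul_bounded_linear)
  have "(\<integral>\<^sup>+ x. F x \<partial>lborel) = (\<integral>\<^sup>+ x. F x \<partial>distr (lborel :: (real^('n wo)) measure) borel vfrom)"
    by (simp add: lborel_vfrom)
  also have "\<dots> = (\<integral>\<^sup>+ z. F (vfrom z) \<partial>lborel)"
    by (subst nn_integral_distr) auto
  also have "\<dots> = ennreal \<bar>det (mwo P)\<bar> * (\<integral>\<^sup>+ z. F (vfrom (mwo P *v z)) \<partial>lborel)"
    using dP by (intro nn_integral_linear_wo) (auto simp: det_mwo)
  also have "\<dots> = ennreal \<bar>det P\<bar> * (\<integral>\<^sup>+ z. F (P *v vfrom z) \<partial>lborel)"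
    by (simp add: det_mwo vfrom_mwo)
  also have "(\<integral>\<^sup>+ z. F (P *v vfrom z) \<partial>lborel) = (\<integral>\<^sup>+ y. F (P *v y) \<partial>distr (lborel :: (real^('n wo)) measure) borel vfrom)"
    by (subst nn_integral_distr) auto
  also have "\<dots> = (\<integral>\<^sup>+ y. F (P *v y) \<partial>lborel)"
    by (simp add: lborel_vfrom)
  finally show ?thesis .
qed

lemma gauss_1d:
  fixes \<sigma> :: real assumes s: "0 < \<sigma>"
  shows "(\<integral>\<^sup>+ t. ennreal (exp (- t\<^sup>2 / (2 * \<sigma>\<^sup>2))) \<partial>lborel) = ennreal (sqrt (2 * pi * \<sigma>\<^sup>2))"
proof -
  have c0: "0 < sqrt (2 * pi * \<sigma>\<^sup>2)" using s by simp
  have eq: "exp (- t\<^sup>2 / (2 * \<sigma>\<^sup>2)) = sqrt (2 * pi * \<sigma>\<^sup>2) * normal_density 0 \<sigma> t" for t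
    using c0 s by (simp add: normal_density_def)
  have "(\<integral>\<^sup>+ t. ennreal (normal_density 0 \<sigma> t) \<partial>lborel) = 1"
    using prob_space.emeasure_space_1[OF prob_space_normal_density[OF s, of 0]]
    by (simp add: emeasure_density)
  then have "(\<integral>\<^sup>+ t. ennreal (sqrt (2 * pi * \<sigma>\<^sup>2)) * ennreal (normal_density 0 \<sigma> t) \<partial>lborel) = ennreal (sqrt (2 * pi * \<sigma>\<^sup>2))"
    by (subst nn_integral_cmult) auto
  then show ?thesis unfolding eq using c0 by (simp add: ennreal_mult)
qed

lemma gauss_nd:
  fixes \<sigma> :: real assumes s: "0 < \<sigma>"
  shows "(\<integral>\<^sup>+ y. ennreal (exp (- (norm (y :: real^'n))\<^sup>2 / (2 * \<sigma>\<^sup>2))) \<partial>lborel) = ennreal (sqrt (2 * pi * \<sigma>\<^sup>2) ^ CARD('n))"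
proof -
  have e: "ennreal (exp (- (norm y)\<^sup>2 / (2 * \<sigma>\<^sup>2))) = (\<Prod>b\<in>Basis. ennreal (exp (- (y \<bullet> b)\<^sup>2 / (2 * \<sigma>\<^sup>2))))" for y :: "real^'n"
  proof -
    have "(norm y)\<^sup>2 = (\<Sum>b\<in>Basis. (y \<bullet> b)\<^sup>2)"
      unfolding power2_norm_eq_inner using euclidean_inner[of y y] by (simp add: power2_eq_square)
    then have "- (norm y)\<^sup>2 / (2 * \<sigma>\<^sup>2) = (\<Sum>b\<in>Basis. - (y \<bullet> b)\<^sup>2 / (2 * \<sigma>\<^sup>2))"
      by (simp add: sum_divide_distrib[symmetric] sum_negf)
    then show ?thesis by (simp add: exp_sum prod_ennreal)
  qed
  have "(\<integral>\<^sup>+ y. ennreal (exp (- (norm (y :: real^'n))\<^sup>2 / (2 * \<sigma>\<^sup>2))) \<partial>lborel)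
      = (\<integral>\<^sup>+ y. (\<Prod>b\<in>Basis. ennreal (exp (- ((y :: real^'n) \<bullet> b)\<^sup>2 / (2 * \<sigma>\<^sup>2)))) \<partial>lborel)"
    by (simp only: e)
  also have "\<dots> = (\<Prod>b\<in>(Basis :: (real^'n) set). (\<integral>\<^sup>+ t. ennreal (exp (- t\<^sup>2 / (2 * \<sigma>\<^sup>2))) \<partial>lborel))"
    by (rule nn_integral_lborel_prod) auto
  also have "\<dots> = ennreal (sqrt (2 * pi * \<sigma>\<^sup>2)) ^ CARD('n)"
    using gauss_1d[OF s] by simp
  finally show ?thesis by (simp add: ennreal_power)
qed

context
  fixes A :: "real^'n^'n"
  assumes Asym: "\<And>x y. x \<bullet> (A *v y) = y \<bullet> (A *v x)"
    and Apd: "\<And>v. v \<noteq> 0 \<Longrightarrow> v \<bullet> (A *v v) > 0"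
begin

lemma Bsum_left: "(\<Sum>t\<in>T. c t *\<^sub>R t) \<bullet> (A *v y) = (\<Sum>t\<in>T. c t * (t \<bullet> (A *v y)))"
  by (simp add: inner_sum_left)

lemma GS:
  "finite S \<Longrightarrow> \<exists>T. finite T \<and> card T \<le> card S \<and> S \<subseteq> span T \<and> (\<forall>t\<in>T. t \<bullet> (A *v t) = 1)
      \<and> (\<forall>t\<in>T. \<forall>s\<in>T. t \<noteq> s \<longrightarrow> t \<bullet> (A *v s) = 0)"
proof (induction S rule: finite_induct)
  case empty
  then show ?case by (intro exI[of _ "{}"]) auto
next
  case (insert a S)
  then obtain T where T: "finite T" "card T \<le> card S" "S \<subseteq> span T" "\<forall>t\<in>T. t \<bullet> (A *v t) = 1"
    "\<forall>t\<in>T. \<forall>s\<in>T. t \<noteq> s \<longrightarrow> t \<bullet> (A *v s) = 0" by blast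
  define a' where "a' = a - (\<Sum>t\<in>T. (a \<bullet> (A *v t)) *\<^sub>R t)"
  have orth: "a' \<bullet> (A *v s) = 0" if s: "s \<in> T" for s
  proof -
    have "(\<Sum>t\<in>T. (a \<bullet> (A *v t)) * (t \<bullet> (A *v s))) = (a \<bullet> (A *v s)) * (s \<bullet> (A *v s)) + (\<Sum>t\<in>T - {s}. (a \<bullet> (A *v t)) * (t \<bullet> (A *v s)))"
      using s T(1) by (simp add: sum.remove)
    also have "(\<Sum>t\<in>T - {s}. (a \<bullet> (A *v t)) * (t \<bullet> (A *v s))) = 0"
      using T(5) s by (intro sum.neutral) auto
    finally have "(\<Sum>t\<in>T. (a \<bullet> (A *v t)) * (t \<bullet> (A *v s))) = a \<bullet> (A *v s)" using T(4) s by simp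
    then show ?thesis unfolding a'_def by (simp add: inner_diff_left Bsum_left)
  qed
  have a_eq: "a = a' + (\<Sum>t\<in>T. (a \<bullet> (A *v t)) *\<^sub>R t)" by (simp add: a'_def)
  have spanT: "(\<Sum>t\<in>T. (a \<bullet> (A *v t)) *\<^sub>R t) \<in> span T"
    by (intro span_sum span_scale span_base) auto
  show ?case
  proof (cases "a' = 0")
    case True
    then have "a \<in> span T" using a_eq spanT by simp
    then show ?thesis using T insert(1,2) by (intro exI[of _ T]) (auto simp: card_insert_if)
  next
    case False
    define r where "r = sqrt (a' \<bullet> (A *v a'))"
    have r0: "r > 0" using Apd[OF False] by (simp add: r_def)
    define e where "e = (1 / r) *\<^sub>R a'"
    have ee: "e \<bullet> (A *v e) = 1"
      using r0 Apd[OF False] by (simp add: e_def matrix_vector_mult_scaleR r_def power2_eq_square[symmetric])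
    have es: "e \<bullet> (A *v s) = 0" if "s \<in> T" for s using orth[OF that] by (simp add: e_def)
    have se: "s \<bullet> (A *v e) = 0" if "s \<in> T" for s using es[OF that] Asym by metis
    have eT: "e \<notin> T" using es ee by force
    have a_span: "a \<in> span (insert e T)"
    proof -
      have "a' = r *\<^sub>R e" using r0 by (simp add: e_def)
      then have "a' \<in> span (insert e T)" by (simp add: span_base span_scale)
      moreover have "(\<Sum>t\<in>T. (a \<bullet> (A *v t)) *\<^sub>R t) \<in> span (insert e T)"
        using spanT span_mono[of T "insert e T"] by auto
      ultimately have "a' + (\<Sum>t\<in>T. (a \<bullet> (A *v t)) *\<^sub>R t) \<in> span (insert e T)" by (rule span_add)
      then show ?thesis using a_eq by simp
    qed
    show ?thesis
    proof (intro exI[of _ "insert e T"] conjI)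
      show "finite (insert e T)" using T(1) by simp
      show "card (insert e T) \<le> card (insert a S)" using T(1,2) eT insert(1,2) by simp
      show "insert a S \<subseteq> span (insert e T)" using a_span T(3) span_mono[of T "insert e T"] by auto
      show "\<forall>t\<in>insert e T. t \<bullet> (A *v t) = 1" using ee T(4) by auto
      show "\<forall>t\<in>insert e T. \<forall>s\<in>insert e T. t \<noteq> s \<longrightarrow> t \<bullet> (A *v s) = 0"
        using T(5) es se by auto
    qed
  qed
qed

lemma exists_P: "\<exists>P :: real^'n^'n. \<forall>y z. (P *v y) \<bullet> (A *v (P *v z)) = y \<bullet> z"
proof -
  obtain T where T: "finite T" "card T \<le> card (Basis :: (real^'n) set)" "Basis \<subseteq> span T"
    "\<forall>t\<in>T. t \<bullet> (A *v t) = 1" "\<forall>t\<in>T. \<forall>s\<in>T. t \<noteq> s \<longrightarrow> t \<bullet> (A *v s) = 0"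
    using GS[of Basis] by auto
  have "UNIV \<subseteq> span T" using T(3) span_mono[of Basis "span T"] by (simp add: span_span)
  then have "dim (UNIV :: (real^'n) set) \<le> card T" using T(1) by (rule dim_le_card)
  then have cT: "card T = CARD('n)" using T(2) by simp
  obtain e where e: "bij_betw e (UNIV :: 'n set) T"
    using finite_same_card_bij[of "UNIV :: 'n set" T] T(1) cT by auto
  define P :: "real^'n^'n" where "P = (\<chi> i j. e j $ i)"
  have Pv: "P *v y = (\<Sum>j\<in>UNIV. y $ j *\<^sub>R e j)" for y
    by (simp add: matrix_mult_sum P_def column_def scalar_mult_eq_scaleR)
  have eT: "e j \<in> T" for j using e by (auto simp: bij_betw_def)
  have einj: "e j = e k \<Longrightarrow> j = k" for j k using e by (auto simp: bij_betw_def inj_def)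
  have Bee: "e j \<bullet> (A *v e k) = (if j = k then 1 else 0)" for j k
  proof (cases "j = k")
    case True then show ?thesis using T(4) eT by simp
  next
    case False
    then have "e j \<noteq> e k" using einj by blast
    then show ?thesis using T(5) eT False by simp
  qed
  have "(P *v y) \<bullet> (A *v (P *v z)) = y \<bullet> z" for y z
  proof -
    have "(P *v y) \<bullet> (A *v (P *v z)) = (\<Sum>j\<in>UNIV. y $ j * (e j \<bullet> (A *v (P *v z))))"
      unfolding Pv[of y] by (simp add: inner_sum_left)
    also have "\<dots> = (\<Sum>j\<in>UNIV. y $ j * z $ j)"
    proof (rule sum.cong[OF refl])
      fix j
      have "e j \<bullet> (A *v (P *v z)) = (P *v z) \<bullet> (A *v e j)" by (rule Asym)
      also have "\<dots> = (\<Sum>k\<in>UNIV. z $ k * (e k \<bullet> (A *v e j)))" unfolding Pv[of z] by (simp add: inner_sum_left)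
      also have "\<dots> = z $ j" by (simp add: Bee if_distrib cong: if_cong)
      finally show "y $ j * (e j \<bullet> (A *v (P *v z))) = y $ j * z $ j" by simp
    qed
    also have "\<dots> = y \<bullet> z" by (simp add: inner_vec_def)
    finally show ?thesis .
  qed
  then show ?thesis by blast
qed

end

lemma mv_meas[measurable]: "(\<lambda>x. (M :: real^'n^'n) *v x) \<in> borel_measurable borel"
  by (intro borel_measurable_continuous_onI linear_continuous_on matrix_vector_mul_bounded_linear)

lemma texp_bound:
  fixes t :: real assumes "0 \<le> t"
  shows "t * exp (- t\<^sup>2 / 2) \<le> 2 * exp (- t\<^sup>2 / 4)"
proof -
  have e: "exp (- t\<^sup>2 / 4) = exp (t\<^sup>2 / 4) * exp (- t\<^sup>2 / 2)" by (simp add: exp_add[symmetric])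
  have "1 + t\<^sup>2 / 4 \<le> exp (t\<^sup>2 / 4)" by (rule exp_ge_add_one_self)
  moreover have "t \<le> 2 * (1 + t\<^sup>2 / 4)"
  proof -
    have h: "0 \<le> (t - 1) * (t - 1)" by simp
    then have h2: "0 \<le> t * t - 2 * t + 1" by (simp add: algebra_simps)
    have "2 * (1 + t\<^sup>2 / 4) = 2 + t * t / 2" by (simp add: power2_eq_square)
    then show ?thesis using h2 by linarith
  qed
  ultimately have "t \<le> 2 * exp (t\<^sup>2 / 4)"
    using mult_left_mono[of "1 + t\<^sup>2 / 4" "exp (t\<^sup>2 / 4)" 2] by linarith
  then have "t * exp (- t\<^sup>2 / 2) \<le> 2 * exp (t\<^sup>2 / 4) * exp (- t\<^sup>2 / 2)"
    by (rule mult_right_mono) simp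
  then show ?thesis unfolding e by (simp add: mult.assoc)
qed

lemma gaussian_facts:
  fixes C :: "real^'n^'n"
  assumes C_sym: "transpose C = C"
    and C_pd: "\<And>v. v \<noteq> 0 \<Longrightarrow> v \<bullet> (C *v v) > 0"
  shows "prob_space (gaussian_vec C) \<and> (\<integral>\<^sup>+ w. ennreal (norm w) \<partial>gaussian_vec C) < \<infinity>"
proof -
  have ker: "\<forall>x. C *v x = 0 \<longrightarrow> x = 0"
  proof (intro allI impI)
    fix x assume "C *v x = 0"
    then show "x = 0" using C_pd[of x] by (cases "x = 0") auto
  qed
  then obtain Bm where "Bm ** C = mat 1" using matrix_left_invertible_ker by blast
  then have "C ** Bm = mat 1" using matrix_left_right_inverse by blast
  then have invC: "invertible C" using \<open>Bm ** C = mat 1\<close> unfolding invertible_def by blast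
  define A where "A = matrix_inv C"
  have CA: "C ** A = mat 1" and AC: "A ** C = mat 1" using minv[OF invC] by (auto simp: A_def)
  have CAx: "C *v (A *v x) = x" for x by (simp add: matrix_vector_mul_assoc CA)
  have Csym': "(C *v a) \<bullet> b = a \<bullet> (C *v b)" for a b
  proof -
    have "a \<bullet> (C *v b) = (a v* C) \<bullet> b" by (simp add: dot_lmul_matrix)
    also have "a v* C = transpose C *v a" by simp
    finally show ?thesis using C_sym by simp
  qed
  have Asym: "x \<bullet> (A *v y) = y \<bullet> (A *v x)" for x y
  proof -
    have "x \<bullet> (A *v y) = (C *v (A *v x)) \<bullet> (A *v y)" by (simp add: CAx)
    also have "\<dots> = (A *v x) \<bullet> (C *v (A *v y))" by (rule Csym')
    also have "\<dots> = y \<bullet> (A *v x)" by (simp add: CAx inner_commute)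
    finally show ?thesis .
  qed
  have Apd: "v \<bullet> (A *v v) > 0" if "v \<noteq> 0" for v
  proof -
    have a0: "A *v v \<noteq> 0" using CAx[of v] that by auto
    have "v \<bullet> (A *v v) = (C *v (A *v v)) \<bullet> (A *v v)" by (simp add: CAx)
    also have "\<dots> = (A *v v) \<bullet> (C *v (A *v v))" by (simp add: inner_commute)
    finally show ?thesis using C_pd[OF a0] by simp
  qed
  obtain P :: "real^'n^'n" where P: "\<And>y z. (P *v y) \<bullet> (A *v (P *v z)) = y \<bullet> z"
    using exists_P[OF Asym Apd] by blast
  define M where "M = transpose P ** A ** P"
  have Mz: "M *v z = z" for z
  proof -
    have ip: "y \<bullet> (M *v z) = y \<bullet> z" for y
    proof -
      have "M *v z = transpose P *v (A *v (P *v z))" by (simp add: M_def matrix_vector_mul_assoc matrix_mul_assoc)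
      then have "y \<bullet> (M *v z) = y \<bullet> ((A *v (P *v z)) v* P)" by simp
      also have "\<dots> = ((A *v (P *v z)) v* P) \<bullet> y" by (rule inner_commute)
      also have "\<dots> = (A *v (P *v z)) \<bullet> (P *v y)" by (rule dot_lmul_matrix)
      also have "\<dots> = y \<bullet> z" using P[of y z] by (simp add: inner_commute)
      finally show ?thesis .
    qed
    have "(M *v z - z) \<bullet> (M *v z - z) = 0"
      using ip[of "M *v z - z"] by (simp add: inner_diff_right)
    then show ?thesis by simp
  qed
  have M1: "M = mat 1" using Mz by (simp add: matrix_eq)
  have dPA: "det P ^ 2 * det A = 1"
    using arg_cong[OF M1, of det] by (simp add: M_def det_mul power2_eq_square mult_ac)
  have dCA: "det C * det A = 1" using arg_cong[OF CA, of det] by (simp add: det_mul)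
  have dA0: "det A \<noteq> 0" using dCA by auto
  have dC: "det C = det P ^ 2" using dPA dCA dA0
    by (metis mult.commute mult_cancel_left)
  have dP0: "det P \<noteq> 0" using dPA by auto
  have sqC: "sqrt (det C) = \<bar>det P\<bar>" by (simp add: dC)
  define K where "K = sqrt ((2 * pi) ^ CARD('n) * det C)"
  have K_eq: "K = sqrt (2 * pi) ^ CARD('n) * \<bar>det P\<bar>"
    by (simp add: K_def real_sqrt_mult real_sqrt_power sqC power_mult_distrib)
  have K0: "K > 0" using dP0 by (simp add: K_eq)
  have G_eq: "gaussian_vec C = density lborel (\<lambda>x. ennreal (exp (- (x \<bullet> (A *v x)) / 2) / K))"
    by (simp add: gaussian_vec_def A_def K_def)
  have qP: "(P *v y) \<bullet> (A *v (P *v y)) = (norm y)\<^sup>2" for y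
    using P[of y y] by (simp add: power2_norm_eq_inner)
  \<comment> \<open>normalisation\<close>
  have "(\<integral>\<^sup>+ x. ennreal (exp (- (x \<bullet> (A *v x)) / 2) / K) \<partial>lborel)
      = ennreal \<bar>det P\<bar> * (\<integral>\<^sup>+ y. ennreal (exp (- ((P *v y) \<bullet> (A *v (P *v y))) / 2) / K) \<partial>lborel)"
    using dP0 by (intro nn_integral_linear) measurable
  also have "(\<integral>\<^sup>+ y. ennreal (exp (- ((P *v y) \<bullet> (A *v (P *v y))) / 2) / K) \<partial>lborel)
      = (\<integral>\<^sup>+ y. ennreal (exp (- (norm (y :: real^'n))\<^sup>2 / (2 * 1\<^sup>2))) * ennreal (1 / K) \<partial>lborel)"
    using K0 by (intro nn_integral_cong) (simp add: qP ennreal_mult[symmetric])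
  also have "\<dots> = (\<integral>\<^sup>+ y. ennreal (exp (- (norm (y :: real^'n))\<^sup>2 / (2 * 1\<^sup>2))) \<partial>lborel) * ennreal (1 / K)"
    by (rule nn_integral_multc) measurable
  also have "\<dots> = ennreal (sqrt (2 * pi * 1\<^sup>2) ^ CARD('n)) * ennreal (1 / K)"
    by (simp only: gauss_nd[of 1] zero_less_one)
  also have "ennreal \<bar>det P\<bar> * (ennreal (sqrt (2 * pi * 1\<^sup>2) ^ CARD('n)) * ennreal (1 / K)) = 1"
    using K0 dP0 by (simp add: ennreal_mult[symmetric] K_eq)
  finally have norm1: "(\<integral>\<^sup>+ x. ennreal (exp (- (x \<bullet> (A *v x)) / 2) / K) \<partial>lborel) = 1" .
  have prob: "prob_space (gaussian_vec C)"
    unfolding G_eq by (rule prob_spaceI) (use norm1 in \<open>simp add: emeasure_density\<close>)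
  \<comment> \<open>first moment\<close>
  obtain Bd where Bd: "Bd > 0" "\<And>y. norm (P *v y) \<le> norm y * Bd"
    using bounded_linear.pos_bounded[OF matrix_vector_mul_bounded_linear[of P]] by blast
  have "(\<integral>\<^sup>+ w. ennreal (norm w) \<partial>gaussian_vec C)
      = (\<integral>\<^sup>+ x. ennreal (exp (- (x \<bullet> (A *v x)) / 2) / K) * ennreal (norm x) \<partial>lborel)"
    unfolding G_eq by (subst nn_integral_density) auto
  also have "\<dots> = (\<integral>\<^sup>+ x. ennreal (exp (- (x \<bullet> (A *v x)) / 2) / K * norm x) \<partial>lborel)"
    using K0 by (intro nn_integral_cong) (simp add: ennreal_mult[symmetric])
  also have "\<dots> = ennreal \<bar>det P\<bar> * (\<integral>\<^sup>+ y. ennreal (exp (- ((P *v y) \<bullet> (A *v (P *v y))) / 2) / K * norm (P *v y)) \<partial>lborel)"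
    using dP0 by (intro nn_integral_linear) measurable
  also have "(\<integral>\<^sup>+ y. ennreal (exp (- ((P *v y) \<bullet> (A *v (P *v y))) / 2) / K * norm (P *v y)) \<partial>lborel)
      \<le> (\<integral>\<^sup>+ y. ennreal (exp (- (norm (y :: real^'n))\<^sup>2 / (2 * (sqrt 2)\<^sup>2))) * ennreal (2 * Bd / K) \<partial>lborel)"
  proof (rule nn_integral_mono)
    fix y :: "real^'n"
    have "exp (- (norm y)\<^sup>2 / 2) / K * norm (P *v y) \<le> exp (- (norm y)\<^sup>2 / 2) / K * (norm y * Bd)"
      using Bd(2)[of y] K0 by (intro mult_left_mono) auto
    also have "\<dots> = (norm y * exp (- (norm y)\<^sup>2 / 2)) * (Bd / K)" by simp
    also have "\<dots> \<le> (2 * exp (- (norm y)\<^sup>2 / 4)) * (Bd / K)"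
      using texp_bound[of "norm y"] Bd(1) K0 by (intro mult_right_mono) auto
    finally have "exp (- (norm y)\<^sup>2 / 2) / K * norm (P *v y) \<le> exp (- (norm y)\<^sup>2 / (2 * (sqrt 2)\<^sup>2)) * (2 * Bd / K)"
      by (simp add: mult_ac)
    then show "ennreal (exp (- ((P *v y) \<bullet> (A *v (P *v y))) / 2) / K * norm (P *v y))
        \<le> ennreal (exp (- (norm y)\<^sup>2 / (2 * (sqrt 2)\<^sup>2))) * ennreal (2 * Bd / K)"
      using Bd(1) K0 by (simp add: qP ennreal_mult[symmetric] ennreal_leI)
  qed
  also have "\<dots> = (\<integral>\<^sup>+ y. ennreal (exp (- (norm (y :: real^'n))\<^sup>2 / (2 * (sqrt 2)\<^sup>2))) \<partial>lborel) * ennreal (2 * Bd / K)"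
    by (rule nn_integral_multc) measurable
  also have "\<dots> = ennreal (sqrt (2 * pi * (sqrt 2)\<^sup>2) ^ CARD('n)) * ennreal (2 * Bd / K)"
    using gauss_nd[where \<sigma>="sqrt 2" and 'n='n] by simp
  finally have "(\<integral>\<^sup>+ w. ennreal (norm w) \<partial>gaussian_vec C)
      \<le> ennreal \<bar>det P\<bar> * (ennreal (sqrt (2 * pi * (sqrt 2)\<^sup>2) ^ CARD('n)) * ennreal (2 * Bd / K))"
    by (simp add: mult_left_mono)
  also have "\<dots> < \<infinity>" by (simp add: ennreal_mult_less_top)
  finally show ?thesis using prob by simp
qed

abbreviation "UM \<equiv> (\<Pi>\<^sub>M i\<in>(UNIV::nat set). uniform_measure lborel {0..1::real})"

lemma ess_bracket_meas_aux:
  "(\<lambda>u. fst (ess_bracket u n)) \<in> borel_measurable UM \<and>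
   (\<lambda>u. fst (snd (ess_bracket u n))) \<in> borel_measurable UM \<and>
   (\<lambda>u. snd (snd (ess_bracket u n))) \<in> borel_measurable UM"
proof (induction n)
  case 0
  then show ?case by simp
next
  case (Suc n)
  then have [measurable]: "(\<lambda>u. fst (ess_bracket u n)) \<in> borel_measurable UM"
   "(\<lambda>u. fst (snd (ess_bracket u n))) \<in> borel_measurable UM"
   "(\<lambda>u. snd (snd (ess_bracket u n))) \<in> borel_measurable UM" by auto
  have e: "\<And>u. ess_bracket u (Suc n) = (
     (if fst (ess_bracket u n) < 0 then fst (ess_bracket u n) else fst (snd (ess_bracket u n)))
      + u (Suc n) * ((if fst (ess_bracket u n) < 0 then snd (snd (ess_bracket u n)) else fst (ess_bracket u n))
         - (if fst (ess_bracket u n) < 0 then fst (ess_bracket u n) else fst (snd (ess_bracket u n)))),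
     (if fst (ess_bracket u n) < 0 then fst (ess_bracket u n) else fst (snd (ess_bracket u n))),
     (if fst (ess_bracket u n) < 0 then snd (snd (ess_bracket u n)) else fst (ess_bracket u n)))"
    by (auto simp: Let_def split: prod.splits)
  show ?case unfolding e by simp
qed

lemma ess_theta_measurable[measurable]:
  "(\<lambda>u. ess_theta u n) \<in> borel_measurable UM"
  using ess_bracket_meas_aux[of n] by (simp add: ess_theta_def)

lemma ell_measurable[measurable]:
  fixes x :: "real^'n"
  shows "(\<lambda>(w, \<theta>). ell x w \<theta>) \<in> borel_measurable borel"
proof -
  have "continuous_on UNIV (\<lambda>p::(real^'n) \<times> real. cos (snd p) *\<^sub>R x + sin (snd p) *\<^sub>R fst p)"
    by (intro continuous_intros)
  then show ?thesis unfolding ell_def case_prod_unfold by (intro borel_measurable_continuous_onI)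
qed

context
  fixes C :: "real^'n^'n" and \<rho> :: "real^'n \<Rightarrow> real" and x :: "real^'n"
  assumes \<rho>_meas[measurable]: "\<rho> \<in> borel_measurable borel"
begin

definition "PP n \<omega> \<longleftrightarrow> ell x (fst \<omega>) (ess_theta (snd (snd \<omega>)) n) \<in> level_set \<rho> (fst (snd \<omega>))"

lemma PP_meas[measurable]: "Measurable.pred (ess_space C \<rho> x) (PP n)"
proof -
  have e: "PP n = (\<lambda>\<omega>. \<rho> ((\<lambda>(w, \<theta>). ell x w \<theta>) (fst \<omega>, ess_theta (snd (snd \<omega>)) n)) \<ge> fst (snd \<omega>))"
    by (auto simp: fun_eq_iff PP_def level_set_def)
  show ?thesis unfolding e ess_space_def gaussian_vec_def by measurable
qed

definition "TT = {\<omega>. \<exists>n. PP n \<omega>}"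
definition "OUT \<omega> = ell x (fst \<omega>) (ess_theta (snd (snd \<omega>)) (LEAST n. PP n \<omega>))"

lemma TT_meas[measurable]: "TT \<inter> space (ess_space C \<rho> x) \<in> sets (ess_space C \<rho> x)"
  unfolding TT_def by measurable

lemma OUT_meas[measurable]: "OUT \<in> borel_measurable (ess_space C \<rho> x)"
proof -
  have "(\<lambda>\<omega>. (\<lambda>n \<omega>. ell x (fst \<omega>) (ess_theta (snd (snd \<omega>)) n)) (LEAST n. PP n \<omega>) \<omega>) \<in> borel_measurable (ess_space C \<rho> x)"
  proof (rule measurable_compose_countable'[where I=UNIV and f="\<lambda>n \<omega>. ell x (fst \<omega>) (ess_theta (snd (snd \<omega>)) n)" and g="\<lambda>\<omega>. LEAST n. PP n \<omega>"])
    show "(\<lambda>\<omega>. ell x (fst \<omega>) (ess_theta (snd (snd \<omega>)) i)) \<in> borel_measurable (ess_space C \<rho> x)" for i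
    proof -
      have "(\<lambda>\<omega>. (\<lambda>(w, \<theta>). ell x w \<theta>) (fst \<omega>, ess_theta (snd (snd \<omega>)) i)) \<in> borel_measurable (ess_space C \<rho> x)"
        unfolding ess_space_def gaussian_vec_def by measurable
      then show ?thesis by simp
    qed
  next
    show "(\<lambda>\<omega>. LEAST n. PP n \<omega>) \<in> measurable (ess_space C \<rho> x) (count_space UNIV)"
      by measurable
  qed simp
  then show ?thesis unfolding OUT_def by simp
qed

definition "KM = distr (density (ess_space C \<rho> x) (indicator TT)) borel OUT"

lemma kernel_eq: "ess_kernel C \<rho> x = KM"
proof -
  have sp: "space (ess_space C \<rho> x) = UNIV"
    by (simp add: ess_space_def gaussian_vec_def space_pair_measure space_PiM)
  have "ess_kernel C \<rho> x = measure_of UNIV (sets borel) (emeasure KM)"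
    unfolding ess_kernel_def
  proof (rule measure_of_eq)
    fix A :: "(real^'n) set" assume "A \<in> sigma_sets UNIV (sets borel)"
    then have A[measurable]: "A \<in> sets borel" using sets.sigma_sets_eq[of borel] by (metis space_borel)
    have E: "{(w, t, u) \<in> space (ess_space C \<rho> x). ess_terminates \<rho> x w t u \<and> ess_output \<rho> x w t u \<in> A}
       = OUT -` A \<inter> space (ess_space C \<rho> x) \<inter> (TT \<inter> space (ess_space C \<rho> x))"
      by (auto simp: ess_terminates_def ess_output_def TT_def OUT_def PP_def)
    have B: "OUT -` A \<inter> space (ess_space C \<rho> x) \<in> sets (ess_space C \<rho> x)" by measurable
    have "emeasure KM A = emeasure (density (ess_space C \<rho> x) (indicator TT)) (OUT -` A \<inter> space (ess_space C \<rho> x))"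
      unfolding KM_def by (subst emeasure_distr) (auto simp: sp)
    also have "\<dots> = (\<integral>\<^sup>+ \<omega>. indicator TT \<omega> * indicator (OUT -` A \<inter> space (ess_space C \<rho> x)) \<omega> \<partial>ess_space C \<rho> x)"
      using B TT_meas by (subst emeasure_density) (auto simp: sp)
    also have "\<dots> = (\<integral>\<^sup>+ \<omega>. indicator (OUT -` A \<inter> space (ess_space C \<rho> x) \<inter> (TT \<inter> space (ess_space C \<rho> x))) \<omega> \<partial>ess_space C \<rho> x)"
      by (intro nn_integral_cong) (auto simp: sp split: split_indicator)
    also have "\<dots> = emeasure (ess_space C \<rho> x) (OUT -` A \<inter> space (ess_space C \<rho> x) \<inter> (TT \<inter> space (ess_space C \<rho> x)))"
      using B TT_meas by (intro nn_integral_indicator) auto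
    finally show "emeasure (ess_space C \<rho> x) {(w, t, u) \<in> space (ess_space C \<rho> x). ess_terminates \<rho> x w t u \<and> ess_output \<rho> x w t u \<in> A} = emeasure KM A"
      unfolding E by simp
  qed auto
  also have "\<dots> = KM"
    using measure_of_of_measure[of KM] by (simp add: KM_def)
  finally show ?thesis .
qed

end

lemma distr_pair_snd':
  assumes N: "prob_space N" and M: "prob_space M"
  shows "distr (N \<Otimes>\<^sub>M M) M snd = M"
proof (intro measure_eqI)
  interpret M: prob_space M by fact
  interpret N: prob_space N by fact
  fix A assume A: "A \<in> sets (distr (N \<Otimes>\<^sub>M M) M snd)"
  from A have "emeasure (distr (N \<Otimes>\<^sub>M M) M snd) A = emeasure (N \<Otimes>\<^sub>M M) (space N \<times> A)"
    by (auto simp add: emeasure_distr space_pair_measure dest: sets.sets_into_space intro!: arg_cong2[where f=emeasure])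
  with A show "emeasure (distr (N \<Otimes>\<^sub>M M) M snd) A = emeasure M A"
    by (simp add: M.emeasure_pair_measure_Times N.emeasure_space_1)
qed simp

lemma nn_integral_distr_eq:
  assumes "T \<in> measurable M M'" "distr M M' T = N" "g \<in> borel_measurable N"
  shows "(\<integral>\<^sup>+ \<omega>. g (T \<omega>) \<partial>M) = (\<integral>\<^sup>+ y. g y \<partial>N)"
  using nn_integral_distr[of T M M' g] assms by simp

lemma norm_ell: "norm (ell x w \<theta>) \<le> \<bar>cos \<theta>\<bar> * norm x + norm w"
proof -
  have "norm (ell x w \<theta>) \<le> norm (cos \<theta> *\<^sub>R x) + norm (sin \<theta> *\<^sub>R w)"
    unfolding ell_def by (rule norm_triangle_ineq)
  also have "norm (sin \<theta> *\<^sub>R w) \<le> norm w"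
    using abs_sin_le_one[of \<theta>] by (simp add: mult_left_le_one_le)
  finally show ?thesis by simp
qed

lemma norm_ell2: "norm (ell x w \<theta>) \<le> norm x + norm w"
proof -
  have "\<bar>cos \<theta>\<bar> * norm x \<le> norm x" using abs_cos_le_one[of \<theta>] by (simp add: mult_left_le_one_le)
  then show ?thesis using norm_ell[of x w \<theta>] by linarith
qed

lemma cos_small:
  fixes \<alpha> v :: real
  assumes "0 < \<alpha>" "\<alpha> \<le> 1" "v \<in> {1/4 - \<alpha>/(4*pi) .. 1/4}"
  shows "abs (cos (2 * pi * v)) \<le> \<alpha>/2"
proof -
  define s where "s = pi/2 - 2 * pi * v"
  have s0: "0 \<le> s" using assms(3) pi_gt_zero unfolding s_def by (auto simp: field_simps)
  have s1: "s \<le> \<alpha>/2" using assms(3) pi_gt_zero unfolding s_def by (auto simp: field_simps)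
  have "cos (2 * pi * v) = sin s" unfolding s_def by (simp add: cos_sin_eq)
  moreover have "0 \<le> sin s" using s0 s1 assms pi_ge_two by (intro sin_ge_zero) auto
  moreover have "sin s \<le> s" using s0 by (rule sin_x_le_x)
  ultimately show ?thesis using s1 by simp
qed

context
  fixes C :: "real^'n^'n" and \<rho> :: "real^'n \<Rightarrow> real" and x :: "real^'n"
    and \<alpha> R :: real
  assumes \<rho>_meas[measurable]: "\<rho> \<in> borel_measurable borel"
    and \<rho>_pos: "\<And>x. \<rho> x > 0"
    and \<alpha>: "0 < \<alpha>" "\<alpha> \<le> 1"
    and R: "R > 0"
    and ball: "\<And>x. norm x > R \<Longrightarrow> cball 0 (\<alpha> * norm x) \<subseteq> level_set \<rho> (\<rho> x)"
begin

definition "II = {1/4 - \<alpha>/(4*pi) .. 1/4::real}"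
definition "cf v = 1 - (1 - \<alpha>/2) * indicator II v"
definition "KK = 1 + 2/\<alpha>"

lemma cf_nonneg: "0 \<le> cf v"
  using \<alpha> by (auto simp: cf_def indicator_def)

lemma pointwise:
  assumes "fst (snd \<omega>) \<le> \<rho> x"
  shows "indicator (TT \<rho> x) \<omega> * ennreal (norm (OUT \<rho> x \<omega>))
     \<le> ennreal (cf (snd (snd \<omega>) 0) * norm x + KK * norm (fst \<omega>) + R)"
proof (cases "\<omega> \<in> TT \<rho> x")
  case False
  then show ?thesis by simp
next
  case True
  obtain w t u where \<omega>: "\<omega> = (w, t, u)" by (cases \<omega>) auto
  have t: "t \<le> \<rho> x" using assms \<omega> by simp
  have K1: "1 \<le> KK" using \<alpha> by (simp add: KK_def)
  have Kw: "norm w \<le> KK * norm w" using mult_right_mono[OF K1 norm_ge_zero[of w]] by simp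
  have gen: "norm (OUT \<rho> x \<omega>) \<le> norm x + norm w"
    using norm_ell2 by (simp add: OUT_def[OF \<rho>_meas] \<omega>)
  have "norm (OUT \<rho> x \<omega>) \<le> cf (u 0) * norm x + KK * norm w + R"
  proof (cases "u 0 \<in> II")
    case False
    then have "cf (u 0) = 1" by (simp add: cf_def)
    then show ?thesis using gen Kw R by simp
  next
    case uI: True
    have cfv: "cf (u 0) = \<alpha>/2" using uI by (simp add: cf_def)
    have cfx: "cf (u 0) * norm x = \<alpha>/2 * norm x" using cfv by simp
    have ax: "0 \<le> \<alpha>/2 * norm x" using \<alpha> by simp
    show ?thesis
    proof (cases "norm x \<le> R")
      case True
      then show ?thesis using gen Kw cfx ax by linarith
    next
      case xR: False
      show ?thesis
      proof (cases "norm w \<le> \<alpha> * norm x / 2")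
        case False
        then have "\<alpha> * norm x \<le> 2 * norm w" by simp
        then have "norm x \<le> 2 / \<alpha> * norm w" using \<alpha> by (simp add: field_simps)
        moreover have "(1 - \<alpha>/2) * norm x \<le> norm x" using \<alpha> by (simp add: mult_left_le_one_le)
        ultimately have "norm x \<le> \<alpha>/2 * norm x + 2/\<alpha> * norm w" by (simp add: algebra_simps)
        moreover have "KK * norm w = norm w + 2/\<alpha> * norm w" by (simp add: KK_def algebra_simps)
        ultimately show ?thesis using gen cfx R by linarith
      next
        case wsmall: True
        have th0: "ess_theta u 0 = 2 * pi * u 0" by (simp add: ess_theta_def)
        have "norm (ell x w (ess_theta u 0)) \<le> \<alpha>/2 * norm x + norm w"
        proof -
          have "\<bar>cos (ess_theta u 0)\<bar> \<le> \<alpha>/2"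
            using cos_small[OF \<alpha> uI[unfolded II_def]] th0 by simp
          then have "\<bar>cos (ess_theta u 0)\<bar> * norm x \<le> \<alpha>/2 * norm x"
            by (rule mult_right_mono) simp
          then show ?thesis using norm_ell[of x w "ess_theta u 0"] by linarith
        qed
        then have n0: "norm (ell x w (ess_theta u 0)) \<le> \<alpha>/2 * norm x + norm w" .
        then have "ell x w (ess_theta u 0) \<in> cball 0 (\<alpha> * norm x)"
          using wsmall by (simp add: dist_norm)
        then have "ell x w (ess_theta u 0) \<in> level_set \<rho> (\<rho> x)" using ball[of x] xR by (meson not_le subsetD)
        then have "PP \<rho> x 0 \<omega>" using t unfolding PP_def[OF \<rho>_meas] level_set_def \<omega> by auto
        then have "(LEAST n. PP \<rho> x n \<omega>) = 0" by simp
        then have "OUT \<rho> x \<omega> = ell x w (ess_theta u 0)" unfolding OUT_def[OF \<rho>_meas] \<omega> by simp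
        then have "norm (OUT \<rho> x \<omega>) = norm (ell x w (ess_theta u 0))" by simp
        then show ?thesis using n0 cfx Kw R by linarith
      qed
    qed
  qed
  then show ?thesis using True \<omega> by (simp add: ennreal_leI)
qed

lemma cf_meas[measurable]: "cf \<in> borel_measurable borel"
  unfolding cf_def II_def by measurable

lemma integral_bound:
  assumes Gp: "prob_space (gaussian_vec C)"
    and Gi: "(\<integral>\<^sup>+ w. ennreal (norm w) \<partial>gaussian_vec C) < \<infinity>"
  shows "(\<integral>\<^sup>+ y. ennreal (norm y) \<partial>ess_kernel C \<rho> x)
     \<le> ennreal ((1 - (1 - \<alpha>/2) * (\<alpha>/(4*pi))) * norm x
          + ((1 + 2/\<alpha>) * enn2real (\<integral>\<^sup>+ w. ennreal (norm w) \<partial>gaussian_vec C) + R))"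
proof -
  let ?G = "gaussian_vec C"
  let ?U = "uniform_measure lborel {0..\<rho> x}"
  let ?U01 = "uniform_measure lborel {0..1::real}"
  let ?S = "ess_space C \<rho> x"
  have S_eq: "?S = ?G \<Otimes>\<^sub>M (?U \<Otimes>\<^sub>M UM)" by (simp add: ess_space_def)
  have pU: "prob_space ?U" using \<rho>_pos[of x] by (intro prob_space_uniform_measure) auto
  have pU01: "prob_space ?U01" by (intro prob_space_uniform_measure) auto
  have pUM: "prob_space UM" using pU01 by (intro prob_space_PiM) auto
  have pUUM: "prob_space (?U \<Otimes>\<^sub>M UM)" using pU pUM by (rule prob_space_pair)
  have pS: "prob_space ?S" unfolding S_eq using Gp pUUM by (rule prob_space_pair)
  have D1: "distr ?S ?G fst = ?G" unfolding S_eq by (rule prob_space.distr_pair_fst[OF pUUM])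
  have D2: "distr ?S (?U \<Otimes>\<^sub>M UM) snd = ?U \<Otimes>\<^sub>M UM" unfolding S_eq using Gp pUUM by (rule distr_pair_snd')
  have D3: "distr (?U \<Otimes>\<^sub>M UM) ?U fst = ?U" by (rule prob_space.distr_pair_fst[OF pUM])
  have D4: "distr (?U \<Otimes>\<^sub>M UM) UM snd = UM" using pU pUM by (rule distr_pair_snd')
  have D5: "distr UM ?U01 (\<lambda>u. u 0) = ?U01" using pU01 by (intro distr_PiM_component) auto
  \<comment> \<open>Step 1: rewrite the kernel integral\<close>
  have meas_OUT: "OUT \<rho> x \<in> borel_measurable ?S" using OUT_meas[OF \<rho>_meas] .
  have meas_TT: "(indicator (TT \<rho> x) :: _ \<Rightarrow> ennreal) \<in> borel_measurable ?S"
  proof -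
    have sp: "space ?S = UNIV"
      by (simp add: ess_space_def gaussian_vec_def space_pair_measure space_PiM)
    show ?thesis by (subst borel_measurable_indicator_iff) (use TT_meas[OF \<rho>_meas] in simp)
  qed
  have "(\<integral>\<^sup>+ y. ennreal (norm y) \<partial>ess_kernel C \<rho> x)
      = (\<integral>\<^sup>+ \<omega>. ennreal (norm (OUT \<rho> x \<omega>)) \<partial>density ?S (indicator (TT \<rho> x)))"
    unfolding kernel_eq[OF \<rho>_meas] KM_def[OF \<rho>_meas]
    by (subst nn_integral_distr) (use meas_OUT in auto)
  also have "\<dots> = (\<integral>\<^sup>+ \<omega>. indicator (TT \<rho> x) \<omega> * ennreal (norm (OUT \<rho> x \<omega>)) \<partial>?S)"
    by (rule nn_integral_density) (use meas_TT meas_OUT in auto)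
  also have "\<dots> \<le> (\<integral>\<^sup>+ \<omega>. ennreal (cf (snd (snd \<omega>) 0) * norm x + KK * norm (fst \<omega>) + R) \<partial>?S)"
  proof (rule nn_integral_mono_AE)
    have "AE t in ?U. t \<le> \<rho> x" by (rule AE_uniform_measureI) auto
    then have "AE t in distr (?U \<Otimes>\<^sub>M UM) ?U fst. t \<le> \<rho> x" unfolding D3 .
    then have "AE p in ?U \<Otimes>\<^sub>M UM. fst p \<le> \<rho> x" by (rule AE_distrD[rotated]) simp
    then have "AE p in distr ?S (?U \<Otimes>\<^sub>M UM) snd. fst p \<le> \<rho> x" unfolding D2 .
    then have "AE \<omega> in ?S. fst (snd \<omega>) \<le> \<rho> x" by (rule AE_distrD[rotated]) (simp add: S_eq)
    then show "AE \<omega> in ?S. indicator (TT \<rho> x) \<omega> * ennreal (norm (OUT \<rho> x \<omega>))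
       \<le> ennreal (cf (snd (snd \<omega>) 0) * norm x + KK * norm (fst \<omega>) + R)"
      by eventually_elim (rule pointwise)
  qed
  also have "\<dots> = (\<integral>\<^sup>+ \<omega>. ennreal (cf (snd (snd \<omega>) 0) * norm x) + ennreal (KK * norm (fst \<omega>)) + ennreal R \<partial>?S)"
  proof (rule nn_integral_cong)
    fix \<omega> :: "(real^'n) \<times> real \<times> (nat \<Rightarrow> real)"
    have "0 \<le> cf (snd (snd \<omega>) 0) * norm x" using cf_nonneg by simp
    moreover have "0 \<le> KK * norm (fst \<omega>)" using \<alpha> by (simp add: KK_def)
    ultimately show "ennreal (cf (snd (snd \<omega>) 0) * norm x + KK * norm (fst \<omega>) + R) =
       ennreal (cf (snd (snd \<omega>) 0) * norm x) + ennreal (KK * norm (fst \<omega>)) + ennreal R"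
      using R by (simp add: ennreal_plus)
  qed
  also have "\<dots> = (\<integral>\<^sup>+ \<omega>. ennreal (cf (snd (snd \<omega>) 0) * norm x) \<partial>?S) + (\<integral>\<^sup>+ \<omega>. ennreal (KK * norm (fst \<omega>)) \<partial>?S)
      + (\<integral>\<^sup>+ \<omega>. ennreal R \<partial>?S)"
  proof -
    have m1: "(\<lambda>\<omega>. ennreal (cf (snd (snd \<omega>) 0) * norm x)) \<in> borel_measurable ?S"
      unfolding S_eq gaussian_vec_def by measurable
    have m2: "(\<lambda>\<omega>. ennreal (KK * norm (fst \<omega>))) \<in> borel_measurable ?S"
      unfolding S_eq gaussian_vec_def by measurable
    have m12: "(\<lambda>\<omega>. ennreal (cf (snd (snd \<omega>) 0) * norm x) + ennreal (KK * norm (fst \<omega>))) \<in> borel_measurable ?S"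
      using m1 m2 by measurable
    show ?thesis
      using nn_integral_add[OF m12, of "\<lambda>_. ennreal R"] nn_integral_add[OF m1 m2] by simp
  qed
  also have "(\<integral>\<^sup>+ \<omega>. ennreal R \<partial>?S) = ennreal R"
    using prob_space.emeasure_space_1[OF pS] by simp
  also have "(\<integral>\<^sup>+ \<omega>. ennreal (KK * norm (fst \<omega>)) \<partial>?S) = (\<integral>\<^sup>+ w. ennreal (KK * norm w) \<partial>?G)"
    by (rule nn_integral_distr_eq[OF _ D1]) (auto simp: S_eq gaussian_vec_def)
  also have "\<dots> = ennreal KK * (\<integral>\<^sup>+ w. ennreal (norm w) \<partial>?G)"
    using \<alpha> by (subst nn_integral_cmult[symmetric]) (auto simp: KK_def gaussian_vec_def ennreal_mult)
  also have "(\<integral>\<^sup>+ w. ennreal (norm w) \<partial>?G) = ennreal (enn2real (\<integral>\<^sup>+ w. ennreal (norm w) \<partial>?G))"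
    using Gi by (simp add: ennreal_enn2real)
  also have "(\<integral>\<^sup>+ \<omega>. ennreal (cf (snd (snd \<omega>) 0) * norm x) \<partial>?S)
      = (\<integral>\<^sup>+ p. ennreal (cf (snd p 0) * norm x) \<partial>(?U \<Otimes>\<^sub>M UM))"
    by (rule nn_integral_distr_eq[where g="\<lambda>p. ennreal (cf (snd p 0) * norm x)", OF _ D2]) (auto simp: S_eq)
  also have "\<dots> = (\<integral>\<^sup>+ u. ennreal (cf (u 0) * norm x) \<partial>UM)"
    by (rule nn_integral_distr_eq[where g="\<lambda>u. ennreal (cf (u 0) * norm x)", OF _ D4]) auto
  also have "\<dots> = (\<integral>\<^sup>+ v. ennreal (cf v * norm x) \<partial>?U01)"
    by (rule nn_integral_distr_eq[where g="\<lambda>v. ennreal (cf v * norm x)", OF _ D5]) auto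
  also have "\<dots> = ennreal ((1 - (1 - \<alpha>/2) * (\<alpha>/(4*pi))) * norm x)"
  proof -
    have eps: "\<alpha>/(4*pi) \<le> 1/4" using \<alpha> pi_gt3 by (simp add: field_simps)
    have epos: "0 \<le> \<alpha>/(4*pi)" using \<alpha> by simp
    have II01: "{0..1} \<inter> II = II" using eps epos by (auto simp: II_def)
    have mII: "measure ?U01 II = \<alpha>/(4*pi)"
      using II01 eps epos by (subst measure_uniform_measure) (auto simp: II_def)
    have intI: "integrable ?U01 (indicator II :: real \<Rightarrow> real)"
      using prob_space.finite_measure[OF pU01]
      by (intro finite_measure.integrable_const_bound[where B=1]) (auto simp: II_def)
    have intc: "integrable ?U01 (\<lambda>v. norm x)"
      by (rule finite_measure.integrable_const[OF prob_space.finite_measure[OF pU01]])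
    have cfeq: "(\<lambda>v. cf v * norm x) = (\<lambda>v. norm x - ((1 - \<alpha>/2) * norm x) * indicator II v)"
      by (auto simp: cf_def fun_eq_iff algebra_simps)
    have int1: "integrable ?U01 (\<lambda>v. cf v * norm x)"
      unfolding cfeq using intI intc
      by (intro Bochner_Integration.integrable_diff Bochner_Integration.integrable_mult_right) auto
    have "(\<integral>\<^sup>+ v. ennreal (cf v * norm x) \<partial>?U01) = ennreal (\<integral> v. cf v * norm x \<partial>?U01)"
      using int1 cf_nonneg by (intro nn_integral_eq_integral) auto
    also have "(\<integral> v. cf v * norm x \<partial>?U01) = norm x - ((1 - \<alpha>/2) * norm x) * measure ?U01 II"
      unfolding cfeq using intI intc prob_space.prob_space[OF pU01]
      by (subst Bochner_Integration.integral_diff) (auto simp: II_def)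
    also have "norm x - ((1 - \<alpha>/2) * norm x) * measure ?U01 II = (1 - (1 - \<alpha>/2) * (\<alpha>/(4*pi))) * norm x"
      unfolding mII using pi_gt_zero by (simp add: field_simps)
    finally show ?thesis .
  qed
  finally have X: "(\<integral>\<^sup>+ y. ennreal (norm y) \<partial>ess_kernel C \<rho> x) \<le> ennreal ((1 - (1 - \<alpha>/2) * (\<alpha>/(4*pi))) * norm x) +
     (ennreal KK * ennreal (enn2real (\<integral>\<^sup>+ w. ennreal (norm w) \<partial>?G)) + ennreal R)"
    by (simp add: add.assoc)
  have a0: "0 \<le> 1 - (1 - \<alpha>/2) * (\<alpha>/(4*pi))"
  proof -
    have "(1 - \<alpha>/2) * (\<alpha>/(4*pi)) \<le> 1 * 1"
      using \<alpha> pi_gt3 by (intro mult_mono) (auto simp: field_simps)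
    then show ?thesis by simp
  qed
  have K0: "0 \<le> KK" using \<alpha> by (simp add: KK_def)
  have "ennreal ((1 - (1 - \<alpha>/2) * (\<alpha>/(4*pi))) * norm x) +
     (ennreal KK * ennreal (enn2real (\<integral>\<^sup>+ w. ennreal (norm w) \<partial>?G)) + ennreal R)
     = ennreal ((1 - (1 - \<alpha>/2) * (\<alpha>/(4*pi))) * norm x
          + (KK * enn2real (\<integral>\<^sup>+ w. ennreal (norm w) \<partial>?G) + R))"
    using a0 K0 R by (simp add: ennreal_plus ennreal_mult)
  with X show ?thesis by (simp add: KK_def)
qed

end

theorem lemma1:
  fixes C :: "real^'n^'n" and \<rho> :: "real^'n \<Rightarrow> real"
  assumes C_sym: "transpose C = C"
    and C_pd: "\<And>v. v \<noteq> 0 \<Longrightarrow> v \<bullet> (C *v v) > 0"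
    and \<rho>_meas: "\<rho> \<in> borel_measurable borel"
    and \<rho>_pos: "\<And>x. \<rho> x > 0"
    and \<alpha>: "0 < \<alpha>" "\<alpha> \<le> 1 / sqrt 2"
    and R: "R > 0"
    and ball: "\<And>x. norm x > R \<Longrightarrow> cball 0 (\<alpha> * norm x) \<subseteq> level_set \<rho> (\<rho> x)"
  shows "\<exists>\<delta> L. 0 \<le> \<delta> \<and> \<delta> < 1 \<and> 0 \<le> L \<and>
           (\<forall>x. (\<integral>\<^sup>+ y. ennreal (norm y) \<partial>ess_kernel C \<rho> x) \<le> ennreal (\<delta> * norm x + L))"
proof -
  have s2: "1 \<le> sqrt (2::real)" by simp
  have \<alpha>1: "\<alpha> \<le> 1"
  proof -
    have "1 / sqrt 2 \<le> (1::real)" using s2 by (simp add: divide_le_eq)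
    then show ?thesis using \<alpha>(2) by linarith
  qed
  have GF: "prob_space (gaussian_vec C) \<and> (\<integral>\<^sup>+ w. ennreal (norm w) \<partial>gaussian_vec C) < \<infinity>"
    by (rule gaussian_facts[OF C_sym C_pd])
  define \<delta> where "\<delta> = 1 - (1 - \<alpha>/2) * (\<alpha>/(4*pi))"
  define L where "L = (1 + 2/\<alpha>) * enn2real (\<integral>\<^sup>+ w. ennreal (norm w) \<partial>gaussian_vec C) + R"
  have pos: "0 < (1 - \<alpha>/2) * (\<alpha>/(4*pi))" using \<alpha>(1) \<alpha>1 by (intro mult_pos_pos) auto
  have le1: "(1 - \<alpha>/2) * (\<alpha>/(4*pi)) \<le> 1 * 1"
    using \<alpha>(1) \<alpha>1 pi_gt3 by (intro mult_mono) (auto simp: field_simps)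
  have "0 \<le> \<delta>" using le1 by (simp add: \<delta>_def)
  moreover have "\<delta> < 1" using pos by (simp add: \<delta>_def)
  moreover have "0 \<le> L" using \<alpha>(1) R by (simp add: L_def)
  moreover have "\<forall>x. (\<integral>\<^sup>+ y. ennreal (norm y) \<partial>ess_kernel C \<rho> x) \<le> ennreal (\<delta> * norm x + L)"
  proof
    fix x
    show "(\<integral>\<^sup>+ y. ennreal (norm y) \<partial>ess_kernel C \<rho> x) \<le> ennreal (\<delta> * norm x + L)"
      using integral_bound[OF \<rho>_meas \<rho>_pos \<alpha>(1) \<alpha>1 R ball, of C x] GF
      unfolding \<delta>_def L_def by blast
  qed
  ultimately show ?thesis by blast
qed

end
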